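(* Let $(G,w)$ be a weighted undirected graph and let $G^{\#}$ denote its group inverse graph. (a) If $G$ is connected, then $G^{\#}$ is connected. (b) If $G$ is bipartite, then $G^{\#}$ is bipartite.
   Context: A weighted undirected graph $(G,w)$ on vertices $v_1,\dots,v_n$ assigns a nonzero real weight $w(v_iv_j)$ to each edge; its adjacency matrix $A$ is the $n\times n$ real symmetric matrix with $a_{ij}=w(v_iv_j)$ if $v_iv_j$ is an edge and $a_{ij}=0$ otherwise. The group inverse $A^{\#}$ of a square matrix $A$ is the unique matrix $X$ with $AXA=A$, $XAX=X$, $AX=XA$ (it exists for real symmetric $A$). The group inverse graph $G^{\#}$ has the same vertex set as $G$, with $v_iv_j$ an edge iff the $(i,j)$ entry of $A^{\#}$ is nonzero, the weight of that edge being that entry. *)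

theory Defs
  imports "HOL-Analysis.Analysis"
begin

text \<open>A weighted graph on vertex set 'n is represented by its real adjacency matrix A;
  v_i v_j is an edge iff the (i,j) entry is nonzero (its weight).\<close>

definition adj_rel :: "real^'n^'n \<Rightarrow> 'n \<Rightarrow> 'n \<Rightarrow> bool" where
  "adj_rel A i j \<longleftrightarrow> A $ i $ j \<noteq> 0"

definition graph_connected :: "real^'n^'n \<Rightarrow> bool" where
  "graph_connected A \<longleftrightarrow> (\<forall>i j. (adj_rel A)\<^sup>*\<^sup>* i j)"

definition graph_bipartite :: "real^'n^'n \<Rightarrow> bool" where
  "graph_bipartite A \<longleftrightarrow> (\<exists>S. \<forall>i j. adj_rel A i j \<longrightarrow> (i \<in> S \<longleftrightarrow> j \<notin> S))"

definition is_group_inverse :: "real^'n^'n \<Rightarrow> real^'n^'n \<Rightarrow> bool" where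
  "is_group_inverse A X \<longleftrightarrow> A ** X ** A = A \<and> X ** A ** X = X \<and> A ** X = X ** A"

definition group_inverse :: "real^'n^'n \<Rightarrow> real^'n^'n" where
  "group_inverse A = (THE X. is_group_inverse A X)"

end

theory Submission
  imports Defs
begin


lemma mm_add_r: "((A::real^'n^'m) + B) ** C = A ** C + B ** C"
  by (simp add: matrix_matrix_mult_def vec_eq_iff sum.distrib algebra_simps)
lemma mm_diff_r: "((A::real^'n^'m) - B) ** C = A ** C - B ** C"
  by (simp add: matrix_matrix_mult_def vec_eq_iff sum_subtractf algebra_simps)
lemma mm_diff_l: "(C::real^'n^'m) ** (A - B) = C ** A - C ** B"
  by (simp add: matrix_matrix_mult_def vec_eq_iff sum_subtractf algebra_simps)
lemma mm_neg_l: "(- (A::real^'n^'m)) ** B = - (A ** B)"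
  by (simp add: matrix_matrix_mult_def vec_eq_iff sum_negf)
lemma mm_neg_r: "(A::real^'n^'m) ** (- B) = - (A ** B)"
  by (simp add: matrix_matrix_mult_def vec_eq_iff sum_negf)

lemma gi_unique:
  fixes A X Y :: "real^'n^'n"
  assumes "is_group_inverse A X" "is_group_inverse A Y"
  shows "X = Y"
proof -
  have x1: "A ** X ** A = A" and x2: "X ** A ** X = X" and x3: "A ** X = X ** A"
    and y1: "A ** Y ** A = A" and y2: "Y ** A ** Y = Y" and y3: "A ** Y = Y ** A"
    using assms unfolding is_group_inverse_def by auto
  have "A ** X = X ** (A ** Y ** A)" using x3 y1 by simp
  also have "\<dots> = (X ** A) ** (Y ** A)" by (simp only: matrix_mul_assoc)
  also have "\<dots> = (A ** X) ** (A ** Y)" using x3 y3 by simp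
  finally have e1: "A ** X = (A ** X) ** (A ** Y)" .
  have "A ** Y = (A ** X ** A) ** Y" using x1 by simp
  also have "\<dots> = (A ** X) ** (A ** Y)" by (simp only: matrix_mul_assoc)
  finally have e2: "A ** Y = (A ** X) ** (A ** Y)" .
  have E: "A ** X = A ** Y" using e1 e2 by simp
  have "X = (X ** A) ** X" using x2 by (simp only: matrix_mul_assoc)
  also have "\<dots> = (A ** Y) ** X" using E x3 by simp
  also have "\<dots> = Y ** (A ** X)" using y3 by (simp only: matrix_mul_assoc)
  also have "\<dots> = Y ** (A ** Y)" using E by simp
  also have "\<dots> = Y" using y2 by (simp only: matrix_mul_assoc)
  finally show ?thesis .
qed

lemma gi_transpose:
  fixes A X :: "real^'n^'n"
  assumes "is_group_inverse A X"
  shows "is_group_inverse (transpose A) (transpose X)"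
proof -
  have x1: "A ** X ** A = A" and x2: "X ** A ** X = X" and x3: "A ** X = X ** A"
    using assms unfolding is_group_inverse_def by auto
  have "transpose A ** transpose X ** transpose A = transpose (A ** X ** A)"
    by (simp only: matrix_transpose_mul matrix_mul_assoc)
  moreover have "transpose X ** transpose A ** transpose X = transpose (X ** A ** X)"
    by (simp only: matrix_transpose_mul matrix_mul_assoc)
  moreover have "transpose A ** transpose X = transpose (X ** A)"
    by (simp only: matrix_transpose_mul)
  moreover have "transpose X ** transpose A = transpose (A ** X)"
    by (simp only: matrix_transpose_mul)
  ultimately show ?thesis unfolding is_group_inverse_def using x1 x2 x3 by simp
qed

lemma gi_neg:
  fixes A X :: "real^'n^'n"
  assumes "is_group_inverse A X"
  shows "is_group_inverse (- A) (- X)"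
proof -
  have x1: "A ** X ** A = A" and x2: "X ** A ** X = X" and x3: "A ** X = X ** A"
    using assms unfolding is_group_inverse_def by auto
  have "(- A) ** (- X) ** (- A) = - (A ** X ** A)"
    "(- X) ** (- A) ** (- X) = - (X ** A ** X)"
    "(- A) ** (- X) = A ** X" "(- X) ** (- A) = X ** A"
    by (simp_all only: mm_neg_l mm_neg_r minus_minus)
  then show ?thesis unfolding is_group_inverse_def using x1 x2 x3 by simp
qed

lemma gi_conj:
  fixes A X D :: "real^'n^'n"
  assumes "is_group_inverse A X" and DD: "D ** D = mat 1"
  shows "is_group_inverse (D ** A ** D) (D ** X ** D)"
proof -
  have x1: "A ** X ** A = A" and x2: "X ** A ** X = X" and x3: "A ** X = X ** A"
    using assms(1) unfolding is_group_inverse_def by auto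
  have DD': "D ** (D ** R) = R" for R
    using DD by (simp only: matrix_mul_assoc matrix_mul_lid)
  have x1': "A ** (X ** (A ** R)) = A ** R" for R
    using x1 by (simp only: matrix_mul_assoc)
  have x2': "X ** (A ** (X ** R)) = X ** R" for R
    using x2 by (simp only: matrix_mul_assoc)
  have x3': "A ** (X ** R) = X ** (A ** R)" for R
    using x3 by (simp only: matrix_mul_assoc)
  have 1: "D ** A ** D ** (D ** X ** D) ** (D ** A ** D) = D ** A ** D"
    by (simp only: matrix_mul_assoc[symmetric] DD' x1')
  have 2: "D ** X ** D ** (D ** A ** D) ** (D ** X ** D) = D ** X ** D"
    by (simp only: matrix_mul_assoc[symmetric] DD' x2')
  have 3: "D ** A ** D ** (D ** X ** D) = D ** X ** D ** (D ** A ** D)"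
    by (simp only: matrix_mul_assoc[symmetric] DD' x3')
  show ?thesis unfolding is_group_inverse_def using 1 2 3 by blast
qed

lemma gi_exists:
  fixes A :: "real^'n^'n"
  assumes sym: "transpose A = A"
  shows "\<exists>X. is_group_inverse A X"
proof -
  have sub: "subspace {x. A *v x = 0}"
    by (auto simp: subspace_def matrix_vector_right_distrib matrix_vector_mult_scaleR)
  obtain B where BS: "B \<subseteq> {x. A *v x = 0}" and orth: "pairwise orthogonal B"
    and nrm: "\<And>x. x \<in> B \<Longrightarrow> norm x = 1" and ind: "independent B"
    and spB: "span B = {x. A *v x = 0}"
    using orthonormal_basis_subspace[OF sub] by metis
  have finB: "finite B" using ind independent_imp_finite by blast
  define K :: "real^'n^'n" where "K = (\<chi> i j. \<Sum>b\<in>B. b$i * b$j)"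
  have Kv: "K *v x = (\<Sum>b\<in>B. (x \<bullet> b) *\<^sub>R b)" for x
    unfolding K_def
    by (simp add: vec_eq_iff matrix_vector_mult_def inner_vec_def sum_component
        sum_distrib_left sum_distrib_right mult_ac sum.swap[of _ B])
  have Kspan: "K *v x \<in> span B" for x
    unfolding Kv by (simp add: span_sum span_mul span_base span_scale)
  have Kid: "A *v x = 0 \<Longrightarrow> K *v x = x" for x
    unfolding Kv using orthonormal_basis_expand[OF orth nrm _ finB] spB by auto
  have AK: "A ** K = 0"
    unfolding matrix_eq
    using Kspan spB by (auto simp: matrix_vector_mul_assoc[symmetric])
  have Kt: "transpose K = K"
    unfolding K_def transpose_def by (simp add: vec_eq_iff mult.commute)
  have KA: "K ** A = 0"
  proof -
    have "transpose (A ** K) = K ** A" by (simp add: matrix_transpose_mul Kt sym)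
    moreover have "transpose (0::real^'n^'n) = 0" by (simp add: transpose_def vec_eq_iff)
    ultimately show ?thesis using AK by simp
  qed
  have KK: "K ** K = K"
    unfolding matrix_eq
    using Kspan spB Kid by (auto simp: matrix_vector_mul_assoc[symmetric])
  have inj: "\<forall>x. (A + K) *v x = 0 \<longrightarrow> x = 0"
  proof (intro allI impI)
    fix x assume h: "(A + K) *v x = 0"
    have "K *v ((A + K) *v x) = 0" using h by simp
    then have "K *v x = 0"
      by (simp add: matrix_vector_mul_assoc matrix_add_ldistrib KA KK)
    with h have "A *v x = 0" by (simp add: matrix_vector_mult_add_rdistrib)
    with Kid \<open>K *v x = 0\<close> show "x = 0" by simp
  qed
  then obtain M where HL: "M ** (A + K) = mat 1"
    using matrix_left_invertible_ker by blast
  then have HR: "(A + K) ** M = mat 1" using matrix_left_right_inverse by blast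
  have AKK: "(A + K) ** K = K" by (simp add: mm_add_r AK KK)
  have KAK: "K ** (A + K) = K" by (simp add: matrix_add_ldistrib KA KK)
  have "M ** K = M ** ((A + K) ** K)" using AKK by simp
  also have "\<dots> = K" using HL by (simp only: matrix_mul_assoc matrix_mul_lid)
  finally have MK: "M ** K = K" .
  have "K ** M = (K ** (A + K)) ** M" using KAK by simp
  also have "\<dots> = K" using HR by (simp only: matrix_mul_assoc[symmetric] matrix_mul_rid)
  finally have KM: "K ** M = K" .
  have "A ** M + K ** M = mat 1" using HR by (simp only: mm_add_r)
  then have AM: "A ** M = mat 1 - K" using KM by (simp add: algebra_simps)
  have "M ** A + M ** K = mat 1" using HL by (simp only: matrix_add_ldistrib)
  then have MA: "M ** A = mat 1 - K" using MK by (simp add: algebra_simps)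
  define X where "X = M - K"
  have AX: "A ** X = mat 1 - K" unfolding X_def by (simp add: mm_diff_l AM AK)
  have XA: "X ** A = mat 1 - K" unfolding X_def by (simp add: mm_diff_r MA KA)
  have "A ** X ** A = A" unfolding AX by (simp add: mm_diff_r KA)
  moreover have "X ** A ** X = X"
    unfolding XA by (simp add: mm_diff_r X_def mm_diff_l KM KK)
  ultimately have "is_group_inverse A X" unfolding is_group_inverse_def using AX XA by simp
  then show ?thesis by blast
qed

lemma gi_of_sym:
  fixes A :: "real^'n^'n"
  assumes "transpose A = A"
  shows "is_group_inverse A (group_inverse A)" "transpose (group_inverse A) = group_inverse A"
proof -
  obtain X where X: "is_group_inverse A X" using gi_exists[OF assms] by blast
  have "group_inverse A = X"
    unfolding group_inverse_def using X gi_unique by blast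
  then show g: "is_group_inverse A (group_inverse A)" using X by simp
  show "transpose (group_inverse A) = group_inverse A"
    using gi_transpose[OF g] assms gi_unique g by metis
qed

definition diagm :: "('n \<Rightarrow> real) \<Rightarrow> real^'n^'n" where
  "diagm d = (\<chi> i j. if i = j then d i else 0)"

lemma diagm_left: "(diagm d ** M) $ i $ j = d i * M $ i $ j"
  unfolding diagm_def matrix_matrix_mult_def
  by (simp add: if_distrib if_distribR sum.delta cong: if_cong)

lemma diagm_right: "(M ** diagm d) $ i $ j = M $ i $ j * d j"
  unfolding diagm_def matrix_matrix_mult_def
  by (simp add: if_distrib if_distribR sum.delta' cong: if_cong)

lemma diagm_comm:
  assumes "\<And>i j. d i \<noteq> d j \<Longrightarrow> X $ i $ j = 0"
  shows "X ** diagm d = diagm d ** X"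
  by (simp add: vec_eq_iff diagm_left diagm_right) (metis assms mult.commute mult_zero_left mult_zero_right)

lemma rassoc: "B ** C = D \<Longrightarrow> B ** (C ** R) = D ** R"
  by (simp add: matrix_mul_assoc)

lemma comm_E:
  fixes A X P :: "real^'n^'n"
  assumes g: "is_group_inverse A X" and XP: "X ** P = P ** X"
  shows "(A ** X) ** P = P ** (A ** X)"
proof -
  have x1: "A ** X ** A = A" and x2: "X ** A ** X = X" and x3: "A ** X = X ** A"
    using g unfolding is_group_inverse_def by auto
  have x2': "X ** (A ** (X ** R)) = X ** R" for R
    using x2 by (simp only: matrix_mul_assoc)
  have x2r: "X ** (A ** X) = X"
    using x2 by (simp only: matrix_mul_assoc)
  have x3': "A ** (X ** R) = X ** (A ** R)" for R
    using x3 by (simp only: matrix_mul_assoc)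
  have XP': "X ** (P ** R) = P ** (X ** R)" for R
    using XP by (simp only: matrix_mul_assoc)
  have 1: "(A ** X) ** P ** (A ** X) = A ** (P ** X)"
    by (simp only: matrix_mul_assoc[symmetric] XP' x2r)
  have 2: "(A ** X) ** P = A ** (P ** X)"
    by (simp only: matrix_mul_assoc[symmetric] XP)
  have 3: "(A ** X) ** P ** (A ** X) = X ** (P ** A)"
    unfolding x3 by (simp only: matrix_mul_assoc[symmetric] XP'[symmetric] x2')
  have 4: "P ** (A ** X) = X ** (P ** A)"
    unfolding x3 by (simp only: XP'[symmetric])
  show ?thesis using 1 2 3 4 by simp
qed

lemma block_decomp:
  fixes A X P Q :: "real^'n^'n"
  assumes g: "is_group_inverse A X" and XP: "X ** P = P ** X" and XQ: "X ** Q = Q ** X"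
    and PP: "P ** P = P" and QQ: "Q ** Q = Q" and PQ: "P + Q = mat 1"
  shows "A = P ** A ** P + Q ** A ** Q"
proof -
  have x1: "A ** X ** A = A" and x2: "X ** A ** X = X" and x3: "A ** X = X ** A"
    using g unfolding is_group_inverse_def by auto
  define E where "E = A ** X"
  have EP: "E ** P = P ** E" unfolding E_def using comm_E[OF g XP] .
  have EQ: "E ** Q = Q ** E" unfolding E_def using comm_E[OF g XQ] .
  have XP': "X ** (P ** R) = P ** (X ** R)" for R using rassoc[OF XP] by (simp only: matrix_mul_assoc)
  have XQ': "X ** (Q ** R) = Q ** (X ** R)" for R using rassoc[OF XQ] by (simp only: matrix_mul_assoc)
  define Z where "Z = P ** A ** P + Q ** A ** Q"
  have "X ** Z = P ** (X ** A) ** P + Q ** (X ** A) ** Q"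
    unfolding Z_def matrix_add_ldistrib by (simp only: XP' XQ' matrix_mul_assoc[symmetric])
  also have "\<dots> = P ** E ** P + Q ** E ** Q" unfolding E_def x3 ..
  also have "\<dots> = E ** (P ** P) + E ** (Q ** Q)"
    by (simp only: EP[symmetric] EQ[symmetric] matrix_mul_assoc)
  also have "\<dots> = E ** (P + Q)" by (simp only: PP QQ matrix_add_ldistrib)
  finally have XZ: "X ** Z = E" using PQ by simp
  have EA: "E ** A = A" unfolding E_def using x1 .
  have EP': "E ** (P ** R) = P ** (E ** R)" for R using rassoc[OF EP] by (simp only: matrix_mul_assoc)
  have EQ': "E ** (Q ** R) = Q ** (E ** R)" for R using rassoc[OF EQ] by (simp only: matrix_mul_assoc)
  have EA': "E ** (A ** R) = A ** R" for R using rassoc[OF EA] .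
  have EZ: "E ** Z = Z"
    unfolding Z_def matrix_add_ldistrib by (simp only: EP' EQ' EA' matrix_mul_assoc[symmetric])
  have "Z = A ** (X ** Z)" using EZ unfolding E_def by (simp add: matrix_mul_assoc)
  also have "\<dots> = A ** (X ** A)" unfolding XZ E_def x3 ..
  also have "\<dots> = A" using x1 by (simp only: matrix_mul_assoc)
  finally show ?thesis unfolding Z_def by simp
qed



lemma part_a:
  fixes A :: "real^'n^'n"
  assumes sym: "transpose A = A" and conn: "graph_connected A"
  shows "graph_connected (group_inverse A)"
proof (rule ccontr)
  define X where "X = group_inverse A"
  have g: "is_group_inverse A X" and Xs: "transpose X = X"
    using gi_of_sym[OF sym] unfolding X_def by auto
  have Xsym: "X $ i $ j = X $ j $ i" for i j
    using Xs by (metis transpose_def vec_lambda_beta)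
  assume "\<not> graph_connected (group_inverse A)"
  then obtain i0 j0 where nr: "\<not> (adj_rel X)\<^sup>*\<^sup>* i0 j0"
    unfolding graph_connected_def X_def by blast
  define S where "S = {j. (adj_rel X)\<^sup>*\<^sup>* i0 j}"
  define d where "d = (\<lambda>i. if i \<in> S then 1 else (0::real))"
  have Xblock: "X $ i $ j = 0" if "(i \<in> S) \<noteq> (j \<in> S)" for i j
  proof (rule ccontr)
    assume nz: "X $ i $ j \<noteq> 0"
    show False
    proof (cases "i \<in> S")
      case True
      then have "j \<in> S" using nz unfolding S_def adj_rel_def
        by (auto intro: rtranclp.rtrancl_into_rtrancl)
      then show False using that True by simp
    next
      case False
      then have "j \<in> S" using that by simp
      then have "i \<in> S" using nz Xsym[of i j] unfolding S_def adj_rel_def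
        by (auto intro: rtranclp.rtrancl_into_rtrancl)
      then show False using False by simp
    qed
  qed
  have XP: "X ** diagm d = diagm d ** X"
    by (rule diagm_comm) (use Xblock in \<open>auto simp: d_def split: if_splits\<close>)
  have XQ: "X ** diagm (\<lambda>i. 1 - d i) = diagm (\<lambda>i. 1 - d i) ** X"
    by (rule diagm_comm) (use Xblock in \<open>auto simp: d_def split: if_splits\<close>)
  have PP: "diagm d ** diagm d = diagm d"
    by (simp add: vec_eq_iff diagm_left) (simp add: diagm_def d_def)
  have QQ: "diagm (\<lambda>i. 1 - d i) ** diagm (\<lambda>i. 1 - d i) = diagm (\<lambda>i. 1 - d i)"
    by (simp add: vec_eq_iff diagm_left) (simp add: diagm_def d_def)
  have PQ: "diagm d + diagm (\<lambda>i. 1 - d i) = mat 1"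
    by (simp add: vec_eq_iff diagm_def mat_def)
  have Adec: "A = diagm d ** A ** diagm d + diagm (\<lambda>i. 1 - d i) ** A ** diagm (\<lambda>i. 1 - d i)"
    using block_decomp[OF g XP XQ PP QQ PQ] .
  have Ablock: "A $ i $ j = 0" if "i \<in> S" "j \<notin> S" for i j
  proof -
    have "A $ i $ j = (diagm d ** A ** diagm d + diagm (\<lambda>i. 1 - d i) ** A ** diagm (\<lambda>i. 1 - d i)) $ i $ j"
      using Adec by simp
    also have "\<dots> = 0" using that by (simp add: diagm_left diagm_right d_def)
    finally show ?thesis .
  qed
  have "j \<in> S" if "(adj_rel A)\<^sup>*\<^sup>* i0 j" for j
    using that
  proof (induction rule: rtranclp_induct)
    case base then show ?case unfolding S_def by simp
  next
    case (step y z)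
    then show ?case using Ablock unfolding adj_rel_def by blast
  qed
  then have "j0 \<in> S" using conn unfolding graph_connected_def by blast
  then show False using nr unfolding S_def by simp
qed

lemma part_b:
  fixes A :: "real^'n^'n"
  assumes sym: "transpose A = A" and bip: "graph_bipartite A"
  shows "graph_bipartite (group_inverse A)"
proof -
  define X where "X = group_inverse A"
  have g: "is_group_inverse A X"
    using gi_of_sym[OF sym] unfolding X_def by auto
  obtain S where S: "\<And>i j. adj_rel A i j \<Longrightarrow> (i \<in> S \<longleftrightarrow> j \<notin> S)"
    using bip unfolding graph_bipartite_def by blast
  define s where "s = (\<lambda>i. if i \<in> S then 1 else (-1::real))"
  define D where "D = diagm s"
  have DD: "D ** D = mat 1"
    by (simp add: vec_eq_iff D_def diagm_left) (simp add: diagm_def mat_def s_def)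
  have DAD: "D ** A ** D = - A"
  proof -
    have "s i * A $ i $ j * s j = - A $ i $ j" for i j
      using S[of i j] unfolding adj_rel_def s_def by (cases "A $ i $ j = 0") auto
    then show ?thesis by (simp add: vec_eq_iff D_def diagm_left diagm_right)
  qed
  have "D ** X ** D = - X"
    using gi_unique[OF gi_conj[OF g DD, unfolded DAD] gi_neg[OF g]] .
  then have e: "s i * X $ i $ j * s j = - X $ i $ j" for i j
  proof -
    have "(D ** X ** D) $ i $ j = (- X) $ i $ j" using \<open>D ** X ** D = - X\<close> by simp
    then show ?thesis by (simp add: D_def diagm_left diagm_right)
  qed
  show ?thesis
    unfolding graph_bipartite_def X_def[symmetric]
  proof (intro exI[of _ S] allI impI)
    fix i j assume "adj_rel X i j"
    then have nz: "X $ i $ j \<noteq> 0" unfolding adj_rel_def .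
    show "(i \<in> S) = (j \<notin> S)"
      using e[of i j] nz unfolding s_def by (auto split: if_splits)
  qed
qed


theorem proposition2p1:
  fixes A :: "real^'n^'n"
  assumes "transpose A = A"
    and "\<forall>i. A $ i $ i = 0"
  shows "(graph_connected A \<longrightarrow> graph_connected (group_inverse A))
       \<and> (graph_bipartite A \<longrightarrow> graph_bipartite (group_inverse A))"
  using part_a[OF assms(1)] part_b[OF assms(1)] by blast

end
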